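(* Let $T=\{t_1,\ldots,t_N\}$ be documents, each containing at most $L$ distinct words from a dictionary $\{w_1,\ldots,w_D\}$ ($D\ge2$). For a word $w$ let $\#(w)$ be the number of documents containing $w$. Fix $\epsilon\in(0,1]$ and $p=2\log D$. Consider the mapper that, for every document $t$ and every unordered pair of distinct words $(w_1,w_2)$ in $t$, independently emits $((w_1,w_2)\to1)$ with probability $\min\!\left(1,\frac{p}{\epsilon}\frac{2}{\#(w_1)+\#(w_2)}\right)$ (DiceSampleEmit). Then the expected total number of emitted pairs (shuffle size) is $O(DL\log(D)/\epsilon)$, independently of $N$.
   Context: This sampling scheme is used to estimate the Dice similarity $\frac{2\#(x,y)}{\#(x)+\#(y)}$, where $\#(x,y)$ is the number of documents containing both $x$ and $y$. $\log$ denotes the natural logarithm. *)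

theory Defs
  imports "HOL-Probability.Probability"
begin

text \<open>Words are natural numbers; the dictionary is {0..<D}. A corpus of N documents is
  an indexed family T :: nat => nat set, document i (for i < N) being the set of distinct
  words it contains.\<close>

definition doc_count :: "(nat \<Rightarrow> nat set) \<Rightarrow> nat \<Rightarrow> nat \<Rightarrow> nat" where
  "doc_count T N w = card {i. i < N \<and> w \<in> T i}"

definition dice_p :: "nat \<Rightarrow> real" where
  "dice_p D = 2 * ln (real D)"

definition emit_slots :: "(nat \<Rightarrow> nat set) \<Rightarrow> nat \<Rightarrow> (nat \<times> nat set) set" where
  "emit_slots T N = {(i, {u, v}) | i u v. i < N \<and> u \<in> T i \<and> v \<in> T i \<and> u \<noteq> v}"

definition dice_emit_prob :: "nat \<Rightarrow> real \<Rightarrow> (nat \<Rightarrow> nat set) \<Rightarrow> nat \<Rightarrow> nat set \<Rightarrow> real" where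
  "dice_emit_prob D \<epsilon> T N e =
     min 1 ((dice_p D / \<epsilon>) * (2 / (\<Sum>w\<in>e. real (doc_count T N w))))"

definition dice_emissions :: "nat \<Rightarrow> real \<Rightarrow> (nat \<Rightarrow> nat set) \<Rightarrow> nat \<Rightarrow> (nat \<times> nat set \<Rightarrow> bool) pmf" where
  "dice_emissions D \<epsilon> T N =
     Pi_pmf (emit_slots T N) False (\<lambda>(i, e). bernoulli_pmf (dice_emit_prob D \<epsilon> T N e))"

definition dice_shuffle_size :: "nat \<Rightarrow> real \<Rightarrow> (nat \<Rightarrow> nat set) \<Rightarrow> nat \<Rightarrow> real" where
  "dice_shuffle_size D \<epsilon> T N =
     measure_pmf.expectation (dice_emissions D \<epsilon> T N)
       (\<lambda>f. real (card {s \<in> emit_slots T N. f s}))"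

end

theory Submission imports Defs begin
lemma exp_card_bern:
  assumes fin: "finite A" and q: "\<And>x. x \<in> A \<Longrightarrow> 0 \<le> q x \<and> q x \<le> 1"
  shows "measure_pmf.expectation (Pi_pmf A False (\<lambda>x. bernoulli_pmf (q x)))
           (\<lambda>f. real (card {s \<in> A. f s})) = sum q A"
proof -
  let ?P = "Pi_pmf A False (\<lambda>x. bernoulli_pmf (q x))"
  have c: "\<And>f. real (card {s \<in> A. f s}) = (\<Sum>s\<in>A. (\<lambda>b. of_bool b :: real) (f s))"
    using fin by (auto simp add: of_bool_def sum.If_cases intro!: arg_cong[where f=card])
  have int: "\<And>s. integrable (measure_pmf ?P) (\<lambda>f. (\<lambda>b. of_bool b :: real) (f s))"
    by (rule measure_pmf.integrable_const_bound[where B=1]) auto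
  have e: "s \<in> A \<Longrightarrow> measure_pmf.expectation ?P (\<lambda>f. (\<lambda>b. of_bool b :: real) (f s)) = q s" for s
  proof -
    assume sA: "s \<in> A"
    have "measure_pmf.expectation ?P (\<lambda>f. (\<lambda>b. of_bool b :: real) (f s))
        = measure_pmf.expectation (map_pmf (\<lambda>f. f s) ?P) (\<lambda>b. of_bool b :: real)"
      by simp
    also have "\<dots> = measure_pmf.expectation (bernoulli_pmf (q s)) (\<lambda>b. of_bool b :: real)"
      using Pi_pmf_component[OF fin, of s False] sA by simp
    also have "\<dots> = q s" using q[OF sA] by (simp add: integral_measure_pmf[of "{True,False}"])
    finally show ?thesis .
  qed
  show ?thesis
    unfolding c
    by (subst Bochner_Integration.integral_sum) (use int e in auto)
qed
lemma bound:
  fixes D L N :: nat and T :: "nat \<Rightarrow> nat set" and \<epsilon> :: real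
  assumes D: "D \<ge> 2" and TL: "\<forall>i<N. T i \<subseteq> {..<D} \<and> card (T i) \<le> L"
    and e: "0 < \<epsilon>"
  shows "dice_shuffle_size D \<epsilon> T N \<le> 4 * real D * real L * ln (real D) / \<epsilon>"
proof -
  define c where "c = 4 * ln (real D) / \<epsilon>"
  define cnt where "cnt u = real (doc_count T N u)" for u
  define g where "g u = min 1 (c / cnt u)" for u
  define q where "q e = dice_emit_prob D \<epsilon> T N e" for e
  have lnD: "ln (real D) > 0" using D by simp
  have c0: "c \<ge> 0" using lnD e by (simp add: c_def)
  have finT: "i < N \<Longrightarrow> finite (T i)" for i using TL finite_subset by blast
  define Tr where "Tr = Sigma {..<N} (\<lambda>i. Sigma (T i) (\<lambda>u. T i - {u}))"
  have finTr: "finite Tr" unfolding Tr_def using finT by (auto intro!: finite_SigmaI)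
  have slots: "emit_slots T N = (\<lambda>(i,u,v). (i,{u,v})) ` Tr"
    unfolding emit_slots_def Tr_def by force
  have finS: "finite (emit_slots T N)" using slots finTr by simp
  have q01: "0 \<le> q e \<and> q e \<le> 1" for e
    using lnD e unfolding q_def dice_emit_prob_def dice_p_def
    by (auto intro!: mult_nonneg_nonneg divide_nonneg_nonneg sum_nonneg)
  have "dice_shuffle_size D \<epsilon> T N
      = measure_pmf.expectation (Pi_pmf (emit_slots T N) False (\<lambda>x. bernoulli_pmf ((\<lambda>(i,e). q e) x)))
          (\<lambda>f. real (card {s \<in> emit_slots T N. f s}))"
    unfolding dice_shuffle_size_def dice_emissions_def q_def
    by (intro arg_cong2[where f=measure_pmf.expectation] refl Pi_pmf_cong) auto
  also have "\<dots> = (\<Sum>x\<in>emit_slots T N. (\<lambda>(i,e). q e) x)"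
    by (rule exp_card_bern[OF finS]) (auto simp: q01)
  also have "\<dots> \<le> (\<Sum>x\<in>Tr. ((\<lambda>(i,e). q e) \<circ> (\<lambda>(i,u,v). (i,{u,v}))) x)"
    unfolding slots by (rule sum_image_le[OF finTr]) (auto simp: q01)
  also have "\<dots> \<le> (\<Sum>x\<in>Tr. (\<lambda>(i,u,v). g u) x)"
  proof (rule sum_mono, clarsimp)
    fix i u v assume "(i,u,v) \<in> Tr"
    hence iN: "i < N" and uT: "u \<in> T i" and vT: "v \<in> T i" and uv: "u \<noteq> v"
      by (auto simp: Tr_def)
    have "i \<in> {i. i < N \<and> u \<in> T i}" using iN uT by simp
    hence "card {i. i < N \<and> u \<in> T i} \<ge> 1"
      by (metis (no_types, lifting) One_nat_def Suc_leI card_gt_0_iff empty_iff finite_nat_set_iff_bounded mem_Collect_eq)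
    hence cu: "cnt u \<ge> 1" by (simp add: cnt_def doc_count_def)
    have cv: "cnt v \<ge> 0" by (simp add: cnt_def)
    have sum2: "(\<Sum>w\<in>{u,v}. real (doc_count T N w)) = cnt u + cnt v"
      using uv by (simp add: cnt_def)
    have "dice_p D / \<epsilon> * (2 / (cnt u + cnt v)) = c / (cnt u + cnt v)"
      by (simp add: dice_p_def c_def)
    also have "\<dots> \<le> c / cnt u"
      using cu cv c0 by (intro divide_left_mono) auto
    finally show "q {u, v} \<le> g u"
      unfolding q_def dice_emit_prob_def g_def sum2 by simp
  qed
  also have "\<dots> = (\<Sum>i<N. \<Sum>u\<in>T i. \<Sum>v\<in>T i - {u}. g u)"
  proof -
    have fs: "\<And>i. i \<in> {..<N} \<Longrightarrow> finite (Sigma (T i) (\<lambda>u. T i - {u}))"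
      using finT by auto
    have "(\<Sum>x\<in>Tr. (\<lambda>(i,u,v). g u) x) = (\<Sum>i<N. \<Sum>p\<in>Sigma (T i) (\<lambda>u. T i - {u}). (\<lambda>(i,u,v). g u) (i,p))"
      unfolding Tr_def by (subst sum.Sigma) (use fs in \<open>auto simp: split_def\<close>)
    also have "\<dots> = (\<Sum>i<N. \<Sum>u\<in>T i. \<Sum>v\<in>T i - {u}. g u)"
    proof (rule sum.cong[OF refl])
      fix i assume "i \<in> {..<N}"
      hence "finite (T i)" using finT by auto
      thus "(\<Sum>p\<in>Sigma (T i) (\<lambda>u. T i - {u}). (\<lambda>(i,u,v). g u) (i,p)) = (\<Sum>u\<in>T i. \<Sum>v\<in>T i - {u}. g u)"
        by (subst sum.Sigma) (auto simp: split_def)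
    qed
    finally show ?thesis .
  qed
  also have "\<dots> \<le> (\<Sum>i<N. \<Sum>u\<in>T i. real L * g u)"
  proof (rule sum_mono, rule sum_mono)
    fix i u assume iN: "i \<in> {..<N}" and uT: "u \<in> T i"
    have g0: "g u \<ge> 0" using c0 by (simp add: g_def cnt_def)
    have "card (T i - {u}) \<le> L" using TL iN finT
      by (meson card_Diff1_le le_trans lessThan_iff)
    thus "(\<Sum>v\<in>T i - {u}. g u) \<le> real L * g u"
      using g0 by (simp add: mult_right_mono)
  qed
  also have "\<dots> = real L * (\<Sum>i<N. \<Sum>u<D. if u \<in> T i then g u else 0)"
  proof -
    have "\<And>i. i < N \<Longrightarrow> (\<Sum>u\<in>T i. g u) = (\<Sum>u<D. if u \<in> T i then g u else 0)"
    proof -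
      fix i assume "i < N"
      hence sub: "T i \<subseteq> {..<D}" using TL by blast
      have "(\<Sum>u<D. if u \<in> T i then g u else 0) = (\<Sum>u\<in>{..<D} \<inter> T i. g u)"
        by (simp add: sum.inter_restrict)
      also have "{..<D} \<inter> T i = T i" using sub by blast
      finally show "(\<Sum>u\<in>T i. g u) = (\<Sum>u<D. if u \<in> T i then g u else 0)" by simp
    qed
    hence "(\<Sum>i<N. \<Sum>u\<in>T i. g u) = (\<Sum>i<N. \<Sum>u<D. if u \<in> T i then g u else 0)"
      by (rule sum.cong[OF refl]) auto
    thus ?thesis by (simp add: sum_distrib_left[symmetric])
  qed
  also have "\<dots> = real L * (\<Sum>u<D. cnt u * g u)"
  proof -
    have "(\<Sum>i<N. if u \<in> T i then g u else 0) = cnt u * g u" for u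
    proof -
      have "(\<Sum>i<N. if u \<in> T i then g u else 0) = (\<Sum>i\<in>{..<N} \<inter> {i. u \<in> T i}. g u)"
        by (subst sum.inter_restrict[where g="\<lambda>i. g u"]) simp_all
      also have "{..<N} \<inter> {i. u \<in> T i} = {i. i < N \<and> u \<in> T i}" by auto
      finally show ?thesis by (simp add: cnt_def doc_count_def)
    qed
    hence "(\<Sum>i<N. \<Sum>u<D. if u \<in> T i then g u else 0) = (\<Sum>u<D. cnt u * g u)"
      by (subst sum.swap) simp
    thus ?thesis by simp
  qed
  also have "\<dots> \<le> real L * (\<Sum>u<D. c)"
  proof (intro mult_left_mono sum_mono)
    fix u
    show "cnt u * g u \<le> c"
    proof (cases "cnt u = 0")
      case True thus ?thesis using c0 by simp
    next
      case False
      hence cp: "cnt u > 0" by (simp add: cnt_def)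
      have "cnt u * g u \<le> cnt u * (c / cnt u)"
        using cp by (intro mult_left_mono) (auto simp: g_def)
      thus ?thesis using cp by simp
    qed
  qed simp
  also have "\<dots> = 4 * real D * real L * ln (real D) / \<epsilon>"
    by (simp add: c_def)
  finally show ?thesis .
qed

theorem theorem9:
  shows "\<exists>C>0. \<forall>(D::nat) (L::nat) (N::nat) (T::nat \<Rightarrow> nat set) (\<epsilon>::real).
     D \<ge> 2 \<longrightarrow> (\<forall>i<N. T i \<subseteq> {..<D} \<and> card (T i) \<le> L) \<longrightarrow>
     0 < \<epsilon> \<longrightarrow> \<epsilon> \<le> 1 \<longrightarrow>
     dice_shuffle_size D \<epsilon> T N \<le> C * real D * real L * ln (real D) / \<epsilon>"
  by (rule exI[of _ 4]) (auto intro: bound)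

end
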